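(* Every finite set $A\subseteq F^2$ can be written as a disjoint union $$A = A_* \sqcup A_1'\sqcup\cdots\sqcup A_N'$$ with $N\le \log_2(|A|+1)+1$, where $A_*$ is irregular and each $A_i'$ is $k_i$-regular (with constant $C_0=2$) for some integer $k_i\ge1$.
   Context: $F$ is a finite field of odd characteristic in which $-1$ is not a square. A line in $F^2$ is a set $\{p+tv:t\in F\}$ with $p,v\in F^2$, $v\ne0$. Given a constant $C_0\ge1$ and an integer $k\ge1$, a set $A\subseteq F^2$ is $k$-regular (with constant $C_0$) if $k\le C_0|A|^{1/2}$ and there exist a set $L$ of lines (the frame of $A$) with $k/C_0\le|L|\le C_0k$ and a partition $A=\bigsqcup_{\ell\in L}A_\ell$ with $A_\ell\subseteq\ell$ and $|A|/(C_0k)\le|A_\ell|\le C_0|A|/k$ for every $\ell\in L$. A set $A\subseteq F^2$ is irregular if $|\ell\cap A|\le|A|^{1/2}$ for every line $\ell$. *)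

theory Defs
  imports Complex_Main
begin

definition line_through :: "'a::field \<times> 'a \<Rightarrow> 'a \<times> 'a \<Rightarrow> ('a \<times> 'a) set" where
  "line_through p v = {(fst p + t * fst v, snd p + t * snd v) | t. True}"

definition is_line :: "('a::field \<times> 'a) set \<Rightarrow> bool" where
  "is_line l \<longleftrightarrow> (\<exists>p v. v \<noteq> (0, 0) \<and> l = line_through p v)"

definition regular :: "real \<Rightarrow> nat \<Rightarrow> ('a::field \<times> 'a) set \<Rightarrow> bool" where
  "regular C0 k A \<longleftrightarrow>
     real k \<le> C0 * sqrt (real (card A)) \<and>
     (\<exists>L :: ('a \<times> 'a) set set. \<exists>Al :: ('a \<times> 'a) set \<Rightarrow> ('a \<times> 'a) set.
        (\<forall>l\<in>L. is_line l) \<and> finite L \<and>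
        real k / C0 \<le> real (card L) \<and> real (card L) \<le> C0 * real k \<and>
        A = (\<Union>l\<in>L. Al l) \<and>
        (\<forall>l\<in>L. \<forall>l'\<in>L. l \<noteq> l' \<longrightarrow> Al l \<inter> Al l' = {}) \<and>
        (\<forall>l\<in>L. Al l \<subseteq> l \<and>
           real (card A) / (C0 * real k) \<le> real (card (Al l)) \<and>
           real (card (Al l)) \<le> C0 * real (card A) / real k))"

definition irregular :: "('a::field \<times> 'a) set \<Rightarrow> bool" where
  "irregular A \<longleftrightarrow> (\<forall>l. is_line l \<longrightarrow> real (card (l \<inter> A)) \<le> sqrt (real (card A)))"

end

theory Submission
  imports Defs
begin

lemma not_irregular_line:
  assumes "\<not> irregular B"
  shows "\<exists>l. is_line l \<and> card B < card (l \<inter> B) ^ 2"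
proof -
  from assms obtain l where l: "is_line l" "sqrt (real (card B)) < real (card (l \<inter> B))"
    unfolding irregular_def by (auto simp: not_le)
  have "real (card B) = (sqrt (real (card B)))^2" by simp
  also have "\<dots> < (real (card (l \<inter> B)))^2"
    using l(2) by (intro power_strict_mono) auto
  finally have "real (card B) < real (card (l \<inter> B) ^ 2)" by simp
  then show ?thesis using l(1) by (auto simp only: of_nat_less_iff)
qed

lemma decomp:
  fixes B :: "('a::{field,finite} \<times> 'a) set"
  shows "\<exists>S g. (\<forall>l\<in>S. is_line l \<and> g l \<subseteq> l \<and> g l \<subseteq> B \<and> 2 \<le> card (g l)) \<and>
     (\<forall>l\<in>S. \<forall>l'\<in>S. l \<noteq> l' \<longrightarrow> g l \<inter> g l' = {}) \<and>
     (\<forall>T\<subseteq>S. T \<noteq> {} \<longrightarrow> (\<exists>l\<in>T. card (\<Union>(g ` T)) < card (g l)^2)) \<and>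
     irregular (B - \<Union>(g ` S))"
proof (induction "card B" arbitrary: B rule: less_induct)
  case less
  show ?case
  proof (cases "irregular B")
    case True
    then show ?thesis by (intro exI[of _ "{}"]) auto
  next
    case False
    then obtain ll where ln: "is_line ll" and big: "card B < card (ll \<inter> B) ^ 2"
      using not_irregular_line by blast
    define p where "p = ll \<inter> B"
    have "card p \<le> card B" unfolding p_def by (intro card_mono) auto
    have c2: "2 \<le> card p"
    proof (rule ccontr)
      assume "\<not> 2 \<le> card p"
      then have "card p = 0 \<or> card p = 1" by arith
      moreover have "card B < card p ^ 2" using big by (simp add: p_def)
      ultimately show False using \<open>card p \<le> card B\<close> by auto
    qed
    then have "p \<noteq> {}" by auto
    define B' where "B' = B - p"
    have "card B' < card B" unfolding B'_def using \<open>p \<noteq> {}\<close> p_def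
      by (intro psubset_card_mono) auto
    from less(1)[OF this] obtain S' g' where
      H: "(\<forall>l\<in>S'. is_line l \<and> g' l \<subseteq> l \<and> g' l \<subseteq> B' \<and> 2 \<le> card (g' l)) \<and>
      (\<forall>l\<in>S'. \<forall>l'\<in>S'. l \<noteq> l' \<longrightarrow> g' l \<inter> g' l' = {}) \<and>
      (\<forall>T\<subseteq>S'. T \<noteq> {} \<longrightarrow> (\<exists>l\<in>T. card (\<Union>(g' ` T)) < card (g' l)^2)) \<and>
      irregular (B' - \<Union>(g' ` S'))" by (elim exE)
    note h = conjunct1[OF H] conjunct1[OF conjunct2[OF H]] conjunct1[OF conjunct2[OF conjunct2[OF H]]]
      conjunct2[OF conjunct2[OF conjunct2[OF H]]]
    note h1 = h(1) and h2 = h(2) and h3 = h(3) and h4 = h(4)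
    have nS: "ll \<notin> S'"
    proof
      assume "ll \<in> S'"
      with h1 have "g' ll \<subseteq> ll \<inter> B'" "2 \<le> card (g' ll)" by auto
      moreover have "ll \<inter> B' = {}" unfolding B'_def p_def by auto
      ultimately show False by auto
    qed
    define S where "S = insert ll S'"
    define g where "g = g'(ll := p)"
    have gS': "\<And>T. T \<subseteq> S' \<Longrightarrow> g ` T = g' ` T" unfolding g_def using nS by auto
    have U: "\<Union>(g ` S) = p \<union> \<Union>(g' ` S')"
    proof -
      have gs: "g ` S' = g' ` S'" by (rule gS') simp
      have gl: "g ll = p" by (simp add: g_def)
      have "g ` S = insert p (g' ` S')" by (simp only: S_def image_insert gs gl)
      then show ?thesis by simp
    qed
    have "B - \<Union>(g ` S) = B' - \<Union>(g' ` S')" unfolding U B'_def by auto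
    with h4 have r4: "irregular (B - \<Union>(g ` S))" by simp
    have r1: "\<forall>l\<in>S. is_line l \<and> g l \<subseteq> l \<and> g l \<subseteq> B \<and> 2 \<le> card (g l)"
      using h1 nS ln c2 unfolding S_def g_def p_def B'_def by auto
    have r2: "\<forall>l\<in>S. \<forall>l'\<in>S. l \<noteq> l' \<longrightarrow> g l \<inter> g l' = {}"
    proof (intro ballI impI)
      fix l l' assume "l \<in> S" "l' \<in> S" "l \<noteq> l'"
      have sub: "\<And>x. x \<in> S' \<Longrightarrow> g x = g' x \<and> g' x \<subseteq> B - p"
        using h1 nS unfolding g_def B'_def by auto
      have gl: "g ll = p" unfolding g_def by simp
      show "g l \<inter> g l' = {}"
      proof (cases "l = ll")
        case True
        then have "l' \<in> S'" using \<open>l' \<in> S\<close> \<open>l \<noteq> l'\<close> unfolding S_def by auto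
        then show ?thesis using sub[of l'] gl True by auto
      next
        case False
        then have l1: "l \<in> S'" using \<open>l \<in> S\<close> unfolding S_def by auto
        show ?thesis
        proof (cases "l' = ll")
          case True
          then show ?thesis using sub[of l] gl l1 by auto
        next
          case False
          then have "l' \<in> S'" using \<open>l' \<in> S\<close> unfolding S_def by auto
          then show ?thesis using sub[of l] sub[of l'] l1 h2 \<open>l \<noteq> l'\<close> by auto
        qed
      qed
    qed
    have r3: "\<forall>T\<subseteq>S. T \<noteq> {} \<longrightarrow> (\<exists>l\<in>T. card (\<Union>(g ` T)) < card (g l)^2)"
    proof (intro allI impI)
      fix T assume T: "T \<subseteq> S" "T \<noteq> {}"
      show "\<exists>l\<in>T. card (\<Union>(g ` T)) < card (g l)^2"
      proof (cases "ll \<in> T")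
        case True
        have "\<Union>(g ` T) \<subseteq> B" using r1 T by auto
        then have "card (\<Union>(g ` T)) \<le> card B" by (intro card_mono) auto
        also have "\<dots> < card (g ll)^2" using big unfolding g_def p_def by simp
        finally show ?thesis using True by blast
      next
        case False
        then have "T \<subseteq> S'" using T unfolding S_def by auto
        with h3 T obtain l where "l \<in> T" "card (\<Union>(g' ` T)) < card (g' l)^2" by blast
        moreover have "g l = g' l" using \<open>l \<in> T\<close> False unfolding g_def by auto
        ultimately show ?thesis using gS'[OF \<open>T \<subseteq> S'\<close>] by (metis)
      qed
    qed
    show ?thesis using r1 r2 r3 r4 by blast
  qed
qed


lemma class_regular:
  fixes C :: "('a::{field,finite} \<times> 'a) set set"
  assumes ne: "C \<noteq> {}"
    and props: "\<forall>l\<in>C. is_line l \<and> g l \<subseteq> l \<and> 2^t \<le> card (g l) \<and> card (g l) < 2^(Suc t)"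
    and disj: "\<forall>l\<in>C. \<forall>l'\<in>C. l \<noteq> l' \<longrightarrow> g l \<inter> g l' = {}"
    and rich: "\<exists>l\<in>C. card (\<Union>(g ` C)) < card (g l)^2"
  shows "regular 2 (card C) (\<Union>(g ` C))"
proof -
  define k where "k = card C"
  define n where "n = card (\<Union>(g ` C))"
  have finC: "finite C" by simp
  have kpos: "0 < k" using ne finC unfolding k_def by (simp add: card_gt_0_iff)
  have nsum: "n = (\<Sum>l\<in>C. card (g l))" unfolding n_def
    by (rule card_UN_disjoint) (use disj in auto)
  have lo: "k * 2^t \<le> n"
  proof -
    have "(\<Sum>l\<in>C. (2::nat)^t) \<le> (\<Sum>l\<in>C. card (g l))" using props by (intro sum_mono) auto
    then show ?thesis unfolding nsum k_def by (simp add: mult.commute)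
  qed
  have hi: "n < k * 2^(Suc t)"
  proof -
    have "(\<Sum>l\<in>C. card (g l)) < (\<Sum>l\<in>C. (2::nat)^(Suc t))"
      using props ne by (intro sum_strict_mono) auto
    then show ?thesis unfolding nsum k_def by (simp add: mult.commute)
  qed
  obtain l0 where l0: "l0 \<in> C" "n < card (g l0)^2" using rich unfolding n_def by blast
  have "card (g l0)^2 \<le> (2^(Suc t))^2"
    using props l0(1) by (intro power_mono) auto
  then have "card (g l0)^2 \<le> (4 * 2^t) * 2^t" by (simp add: power2_eq_square)
  then have "k * 2^t < (4 * 2^t) * 2^t" using lo l0(2) by linarith
  then have kb: "k < 4 * 2^t" using mult_less_cancel2 by blast
  have "k * k \<le> 4 * n"
  proof -
    have "k * k \<le> k * (4 * 2^t)" using kb by simp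
    also have "\<dots> = 4 * (k * 2^t)" by simp
    also have "\<dots> \<le> 4 * n" using lo by simp
    finally show ?thesis .
  qed
  then have "real k * real k \<le> 4 * real n" by (metis of_nat_le_iff of_nat_mult of_nat_numeral)
  then have "sqrt (real k * real k) \<le> sqrt (4 * real n)" by (rule real_sqrt_le_mono)
  then have kk: "real k \<le> 2 * sqrt (real n)" by (simp add: real_sqrt_mult)
  have each: "\<forall>l\<in>C. real n / (2 * real k) \<le> real (card (g l)) \<and>
               real (card (g l)) \<le> 2 * real n / real k"
  proof
    fix l assume l: "l \<in> C"
    have a: "n \<le> 2 * k * card (g l)"
    proof -
      have "n \<le> k * 2^(Suc t)" using hi by simp
      also have "\<dots> = 2 * k * 2^t" by simp
      also have "\<dots> \<le> 2 * k * card (g l)" using props l by simp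
      finally show ?thesis .
    qed
    have b: "card (g l) * k \<le> 2 * n"
    proof -
      have "card (g l) * k \<le> 2^(Suc t) * k" using props l by (intro mult_right_mono) auto
      also have "\<dots> = 2 * (k * 2^t)" by simp
      also have "\<dots> \<le> 2 * n" using lo by simp
      finally show ?thesis .
    qed
    have a': "real n \<le> 2 * real k * real (card (g l))" using a by (metis of_nat_le_iff of_nat_mult of_nat_numeral)
    have b': "real (card (g l)) * real k \<le> 2 * real n" using b by (metis of_nat_le_iff of_nat_mult of_nat_numeral)
    show "real n / (2 * real k) \<le> real (card (g l)) \<and> real (card (g l)) \<le> 2 * real n / real k"
      using a' b' kpos by (simp add: divide_le_eq le_divide_eq mult.commute)
  qed
  have kk': "real (card C) \<le> 2 * sqrt (real (card (\<Union>(g ` C))))" using kk unfolding k_def n_def .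
  have L1: "\<forall>l\<in>C. is_line l" using props by blast
  have L2: "real (card C) / 2 \<le> real (card C)" by simp
  have L3: "real (card C) \<le> 2 * real (card C)" by simp
  have L5: "\<forall>l\<in>C. g l \<subseteq> l \<and>
           real (card (\<Union>(g ` C))) / (2 * real (card C)) \<le> real (card (g l)) \<and>
           real (card (g l)) \<le> 2 * real (card (\<Union>(g ` C))) / real (card C)"
    using props each unfolding k_def n_def by blast
  show ?thesis unfolding regular_def
    apply (rule conjI)
     apply (rule kk')
    apply (rule exI[of _ C], rule exI[of _ g])
    apply (intro conjI)
          apply (fact L1)
         apply (fact finC)
        apply (fact L2)
       apply (fact L3)
      apply (rule refl)
     apply (fact disj)
    apply (fact L5)
    done
qed


lemma pow_class_unique:
  fixes a b c :: nat
  assumes "2^a \<le> c" "c < 2^Suc a" "2^b \<le> c" "c < 2^Suc b"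
  shows "a = b"
proof (rule ccontr)
  assume "a \<noteq> b"
  then consider "Suc a \<le> b" | "Suc b \<le> a" by linarith
  then show False
  proof cases
    case 1
    then have "(2::nat)^Suc a \<le> 2^b" by (rule power_increasing) simp
    then show False using assms by linarith
  next
    case 2
    then have "(2::nat)^Suc b \<le> 2^a" by (rule power_increasing) simp
    then show False using assms by linarith
  qed
qed

theorem lemma4p1:
  fixes A :: "('a::{field,finite} \<times> 'a) set"
  assumes "odd CHAR('a)"
    and "\<not> (\<exists>x::'a. x * x = - 1)"
  shows "\<exists>Astar (N::nat) (Ap :: nat \<Rightarrow> ('a \<times> 'a) set) (k :: nat \<Rightarrow> nat).
           real N \<le> log 2 (real (card A) + 1) + 1 \<and>
           A = Astar \<union> (\<Union>i<N. Ap i) \<and>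
           (\<forall>i<N. Astar \<inter> Ap i = {}) \<and>
           (\<forall>i<N. \<forall>j<N. i \<noteq> j \<longrightarrow> Ap i \<inter> Ap j = {}) \<and>
           irregular Astar \<and>
           (\<forall>i<N. k i \<ge> 1 \<and> regular 2 (k i) (Ap i))"
proof -
  obtain S g where
      H: "(\<forall>l\<in>S. is_line l \<and> g l \<subseteq> l \<and> g l \<subseteq> A \<and> 2 \<le> card (g l)) \<and>
     (\<forall>l\<in>S. \<forall>l'\<in>S. l \<noteq> l' \<longrightarrow> g l \<inter> g l' = {}) \<and>
     (\<forall>T\<subseteq>S. T \<noteq> {} \<longrightarrow> (\<exists>l\<in>T. card (\<Union>(g ` T)) < card (g l)^2)) \<and>
     irregular (A - \<Union>(g ` S))"
    using decomp[of A] by (elim exE)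
  note h = conjunct1[OF H] conjunct1[OF conjunct2[OF H]] conjunct1[OF conjunct2[OF conjunct2[OF H]]]
      conjunct2[OF conjunct2[OF conjunct2[OF H]]]
  note h1 = h(1) and h2 = h(2) and h3 = h(3) and h4 = h(4)
  define C where "C t = {l\<in>S. 2^t \<le> card (g l) \<and> card (g l) < 2^(Suc t)}" for t :: nat
  define Ts where "Ts = {t. 1 \<le> t \<and> C t \<noteq> {}}"
  have Tsb: "\<And>t. t \<in> Ts \<Longrightarrow> 1 \<le> t \<and> 2^t \<le> card A"
  proof -
    fix t assume "t \<in> Ts"
    then obtain l where l: "l \<in> S" "2^t \<le> card (g l)" "1 \<le> t" unfolding Ts_def C_def by auto
    have "card (g l) \<le> card A" using h1 l(1) by (intro card_mono) auto
    then show "1 \<le> t \<and> 2^t \<le> card A" using l by linarith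
  qed
  have finTs: "finite Ts"
  proof (rule finite_subset)
    show "Ts \<subseteq> {..card A}"
    proof
      fix t assume "t \<in> Ts"
      then have "2^t \<le> card A" using Tsb by blast
      moreover have "t < 2^t" by (rule less_exp)
      ultimately have "t \<le> card A" by linarith
      then show "t \<in> {..card A}" by simp
    qed
  qed simp
  obtain e where e: "bij_betw e {0..<card Ts} Ts" using ex_bij_betw_nat_finite[OF finTs] by blast
  define N where "N = card Ts"
  define Ap where "Ap i = \<Union>(g ` C (e i))" for i
  define k where "k i = card (C (e i))" for i
  define Astar where "Astar = A - \<Union>(g ` S)"
  have eTs: "\<And>i. i < N \<Longrightarrow> e i \<in> Ts" using e unfolding N_def bij_betw_def by auto
  have CS: "\<And>t. C t \<subseteq> S" unfolding C_def by auto
  have Nb: "real N \<le> log 2 (real (card A) + 1) + 1"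
  proof (cases "Ts = {}")
    case True
    then have "N = 0" unfolding N_def by simp
    moreover have "0 \<le> log 2 (real (card A) + 1)" by simp
    ultimately show ?thesis by simp
  next
    case False
    define M where "M = Max Ts"
    have "M \<in> Ts" unfolding M_def using False finTs by simp
    have "Ts \<subseteq> {1..M}" unfolding M_def using Tsb finTs by auto
    then have "N \<le> M" unfolding N_def using card_mono[of "{1..M}" Ts] by simp
    moreover have "2^M \<le> card A + 1" using Tsb[OF \<open>M \<in> Ts\<close>] by simp
    then have "real M \<le> log 2 (real (card A + 1))" by (rule le_log2_of_power)
    then have "real M \<le> log 2 (real (card A) + 1)" by (simp add: add.commute)
    moreover note \<open>N \<le> M\<close>
    ultimately show ?thesis by linarith
  qed
  have cover: "(\<Union>i<N. Ap i) = \<Union>(g ` S)"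
  proof
    show "(\<Union>i<N. Ap i) \<subseteq> \<Union>(g ` S)" unfolding Ap_def using CS by blast
    show "\<Union>(g ` S) \<subseteq> (\<Union>i<N. Ap i)"
    proof
      fix x assume "x \<in> \<Union>(g ` S)"
      then obtain l where l: "l \<in> S" "x \<in> g l" by blast
      have "2 \<le> card (g l)" using h1 l(1) by blast
      then obtain t where t: "2^t \<le> card (g l)" "card (g l) < 2^(t+1)"
        using ex_power_ivl1[of 2 "card (g l)"] by auto
      have "t \<noteq> 0" using t \<open>2 \<le> card (g l)\<close> by (cases t) auto
      then have "t \<in> Ts" "l \<in> C t" unfolding Ts_def C_def using l t by auto
      then obtain i where "i \<in> {0..<card Ts}" "e i = t" using e unfolding bij_betw_def by force
      then show "x \<in> (\<Union>i<N. Ap i)" unfolding Ap_def N_def using \<open>l \<in> C t\<close> l(2) by auto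
    qed
  qed
  have r1: "A = Astar \<union> (\<Union>i<N. Ap i)" unfolding cover Astar_def using h1 by auto
  have r2: "\<forall>i<N. Astar \<inter> Ap i = {}" using cover unfolding Astar_def by auto
  have r3: "\<forall>i<N. \<forall>j<N. i \<noteq> j \<longrightarrow> Ap i \<inter> Ap j = {}"
  proof (intro allI impI)
    fix i j assume ij: "i < N" "j < N" "i \<noteq> j"
    have "e i \<noteq> e j" using e ij unfolding bij_betw_def inj_on_def N_def by auto
    have dl: "\<And>l l'. l \<in> C (e i) \<Longrightarrow> l' \<in> C (e j) \<Longrightarrow> l \<noteq> l'"
      using pow_class_unique \<open>e i \<noteq> e j\<close> unfolding C_def by blast
    show "Ap i \<inter> Ap j = {}" unfolding Ap_def
    proof (rule ccontr)
      assume "\<Union> (g ` C (e i)) \<inter> \<Union> (g ` C (e j)) \<noteq> {}"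
      then obtain l l' x where "l \<in> C (e i)" "l' \<in> C (e j)" "x \<in> g l" "x \<in> g l'" by blast
      then show False using dl h2 CS by blast
    qed
  qed
  have r4: "\<forall>i<N. k i \<ge> 1 \<and> regular 2 (k i) (Ap i)"
  proof (intro allI impI conjI)
    fix i assume i: "i < N"
    have ne: "C (e i) \<noteq> {}" using eTs[OF i] unfolding Ts_def by auto
    then show "k i \<ge> 1" unfolding k_def by (simp add: Suc_le_eq card_gt_0_iff)
    show "regular 2 (k i) (Ap i)" unfolding k_def Ap_def
    proof (rule class_regular[OF ne])
      show "\<forall>l\<in>C (e i). is_line l \<and> g l \<subseteq> l \<and> 2 ^ e i \<le> card (g l) \<and> card (g l) < 2 ^ Suc (e i)"
        using h1 unfolding C_def by auto
      show "\<forall>l\<in>C (e i). \<forall>l'\<in>C (e i). l \<noteq> l' \<longrightarrow> g l \<inter> g l' = {}" using h2 CS by blast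
      show "\<exists>l\<in>C (e i). card (\<Union> (g ` C (e i))) < (card (g l))\<^sup>2" using h3 CS ne by blast
    qed
  qed
  show ?thesis
    apply (rule exI[of _ Astar], rule exI[of _ N], rule exI[of _ Ap], rule exI[of _ k])
    using Nb r1 r2 r3 r4 h4 unfolding Astar_def by blast
qed

end
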